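(* Let $\mathcal P$ be an energy timed path from $s_0$ to $s_n$ and $E$ an energy constraint. Then the energy relation $\mathcal R^E_{\mathcal P}$ is a closed convex subset of $E\times E$ and can be described by a finite conjunction of non-strict linear inequalities with rational coefficients over $(w_0,w_1)$. Consequently, for every $I\in\mathcal I(E)$, both $\mathcal R^E_{\mathcal P}(I)$ and $(\mathcal R^E_{\mathcal P})^{-1}(I)$ belong to $\mathcal I(E)$. The same holds for any finite composition $\mathcal R^E_{\mathcal P_k}\circ\cdots\circ\mathcal R^E_{\mathcal P_1}$ of such energy relations.
   Context: An energy timed automaton (ETA) is a tuple $\langle S,S_0,X,\mathrm{Inv},r,T\rangle$ where $S$ is a finite set of states, $S_0\subseteq S$ the initial states, $X$ a finite set of clocks, $\mathrm{Inv}$ assigns to each state an invariant which is a conjunction of closed (non-strict) clock constraints $x\bowtie c$ with $\bowtie\in\{\le,\ge,=\}$ and $c$ rational, $r\colon S\to\mathbb Q$ assigns an energy rate to each state, and $T$ is a finite set of transitions $(s,g,u,z,s')$ with $g$ a closed clock constraint (guard), $u\in\mathbb Q$ an energy update, and $z\subseteq X$ a set of clocks to reset. Given transitions $t_i=(s_i,g_i,u_i,z_i,s_{i+1})$, $0\le i<n$, a finite run is a sequence of configurations $(\ell_j,v_j,w_j)_{0\le j\le 2n}$ for which there exist delays $d_i\ge 0$ with: $\ell_{2j}=\ell_{2j+1}=s_j$, $\ell_{2n}=s_n$; $v_{2j+1}=v_{2j}+d_j$, $v_{2j+2}=v_{2j+1}[z_j\to0]$; $v_{2j}\models\mathrm{Inv}(s_j)$,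 $v_{2j+1}\models \mathrm{Inv}(s_j)\wedge g_j$; $w_{2j+1}=w_{2j}+d_j\,r(s_j)$, $w_{2j+2}=w_{2j+1}+u_j$. An energy constraint is a closed interval $E$ with rational bounds; a run satisfies $E$ if all its energy levels lie in $E$. $\mathcal I(E)$ is the set of closed subintervals of $E$ (including $\emptyset$). An energy timed path (ETP) from $s_0$ to $s_n$ is an ETA with states $s_0,\dots,s_n$, initial state $s_0$, and exactly one transition from $s_i$ to $s_{i+1}$ for each $i<n$. The energy relation $\mathcal R^E_{\mathcal P}(w_0,w_1)$ holds iff there is a finite run of $\mathcal P$ from $(s_0,\mathbf 0,w_0)$ to $(s_n,\mathbf 0,w_1)$ satisfying $E$. For $I\in\mathcal I(E)$: $\mathcal R(I)=\{w_1\in E\mid\exists w_0\in I.\ \mathcal R(w_0,w_1)\}$, $\mathcal R^{-1}(I)=\{w_0\in E\mid \exists w_1\in I.\ \mathcal R(w_0,w_1)\}$. *)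

theory Defs
  imports "HOL-Analysis.Analysis"
begin

(* Clock set X is modelled as a finite type 'c; valuations are 'c \<Rightarrow> real. *)

datatype cmp = CLe | CGe | CEq

type_synonym 'c atom = "'c \<times> cmp \<times> rat"
type_synonym 'c clkc = "'c atom list"

fun sat_atom :: "('c \<Rightarrow> real) \<Rightarrow> 'c atom \<Rightarrow> bool" where
  "sat_atom v (x, CLe, c) = (v x \<le> of_rat c)"
| "sat_atom v (x, CGe, c) = (v x \<ge> of_rat c)"
| "sat_atom v (x, CEq, c) = (v x = of_rat c)"

definition sat :: "('c \<Rightarrow> real) \<Rightarrow> 'c clkc \<Rightarrow> bool" where
  "sat v g = (\<forall>a\<in>set g. sat_atom v a)"

definition reset :: "('c \<Rightarrow> real) \<Rightarrow> 'c set \<Rightarrow> ('c \<Rightarrow> real)" where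
  "reset v z = (\<lambda>x. if x \<in> z then 0 else v x)"

(* Energy timed path s_0 -> ... -> s_n, n = length (trs P).
   rate i = r(s_i), inv i = Inv(s_i), trs ! i = (g_i, u_i, z_i) the transition s_i -> s_{i+1}. *)
record 'c etp =
  rate :: "nat \<Rightarrow> rat"
  inv  :: "nat \<Rightarrow> 'c clkc"
  trs  :: "('c clkc \<times> rat \<times> 'c set) list"

definition guard :: "'c etp \<Rightarrow> nat \<Rightarrow> 'c clkc" where
  "guard P i = fst (trs P ! i)"
definition upd :: "'c etp \<Rightarrow> nat \<Rightarrow> rat" where
  "upd P i = fst (snd (trs P ! i))"
definition rst :: "'c etp \<Rightarrow> nat \<Rightarrow> 'c set" where
  "rst P i = snd (snd (trs P ! i))"

definition econ :: "rat \<Rightarrow> rat \<Rightarrow> real set" where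
  "econ a b = {of_rat a .. of_rat b}"

(* a finite run of P from (s_0, v0, w0) to (s_n, vn, wn), configurations indexed 0..2n,
   all of whose energy levels lie in E *)
definition run_sat :: "'c etp \<Rightarrow> real set \<Rightarrow> (nat \<Rightarrow> ('c \<Rightarrow> real)) \<Rightarrow> (nat \<Rightarrow> real) \<Rightarrow> bool" where
  "run_sat P E v w \<longleftrightarrow>
     (let n = length (trs P) in
      (\<exists>d :: nat \<Rightarrow> real. \<forall>j<n.
          d j \<ge> 0
        \<and> v (2*j+1) = (\<lambda>x. v (2*j) x + d j)
        \<and> v (2*j+2) = reset (v (2*j+1)) (rst P j)
        \<and> sat (v (2*j)) (inv P j)
        \<and> sat (v (2*j+1)) (inv P j) \<and> sat (v (2*j+1)) (guard P j)
        \<and> w (2*j+1) = w (2*j) + d j * of_rat (rate P j)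
        \<and> w (2*j+2) = w (2*j+1) + of_rat (upd P j))
      \<and> (\<forall>j\<le>2*n. w j \<in> E))"

definition erel :: "'c etp \<Rightarrow> real set \<Rightarrow> (real \<times> real) set" where
  "erel P E = {(w0, w1). \<exists>v w. run_sat P E v w \<and> v 0 = (\<lambda>_. 0) \<and> w 0 = w0
                     \<and> v (2 * length (trs P)) = (\<lambda>_. 0) \<and> w (2 * length (trs P)) = w1}"

definition subints :: "real set \<Rightarrow> real set set" where
  "subints E = {I. I \<subseteq> E \<and> (I = {} \<or> (\<exists>l u. I = {l..u}))}"

definition rimg :: "(real \<times> real) set \<Rightarrow> real set \<Rightarrow> real set \<Rightarrow> real set" where
  "rimg R E I = {w1 \<in> E. \<exists>w0\<in>I. (w0, w1) \<in> R}"

definition rpre :: "(real \<times> real) set \<Rightarrow> real set \<Rightarrow> real set \<Rightarrow> real set" where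
  "rpre R E I = {w0 \<in> E. \<exists>w1\<in>I. (w0, w1) \<in> R}"

(* composition R_{P_k} o ... o R_{P_1} for the list [P_1, ..., P_k] (P_1 applied first) *)
fun ecomp :: "'c etp list \<Rightarrow> real set \<Rightarrow> (real \<times> real) set" where
  "ecomp [] E = Id_on E"
| "ecomp [P] E = erel P E"
| "ecomp (P # Ps) E = erel P E O ecomp Ps E"

definition good_rel :: "(real \<times> real) set \<Rightarrow> real set \<Rightarrow> bool" where
  "good_rel R E \<longleftrightarrow>
     R \<subseteq> E \<times> E \<and> closed R \<and> convex R
   \<and> (\<exists>L :: (rat \<times> rat \<times> rat) list.
        R = {(w0, w1). \<forall>(\<alpha>, \<beta>, \<gamma>)\<in>set L. of_rat \<alpha> * w0 + of_rat \<beta> * w1 \<le> of_rat \<gamma>})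
   \<and> (\<forall>I\<in>subints E. rimg R E I \<in> subints E \<and> rpre R E I \<in> subints E)"

end

theory Submission imports Defs begin


type_synonym form = "(nat \<Rightarrow> rat) \<times> rat"

definition aval :: "nat \<Rightarrow> form \<Rightarrow> (nat \<Rightarrow> real) \<Rightarrow> real" where
  "aval m f x = (\<Sum>i<m. real_of_rat (fst f i) * x i) + real_of_rat (snd f)"

definition polyset :: "nat \<Rightarrow> form list \<Rightarrow> (nat \<Rightarrow> real) set" where
  "polyset m L = {x. \<forall>f\<in>set L. aval m f x \<le> 0}"

definition rpoly :: "nat \<Rightarrow> (nat \<Rightarrow> real) set \<Rightarrow> bool" where
  "rpoly m S \<longleftrightarrow> (\<exists>L. S = polyset m L)"

definition fadd :: "form \<Rightarrow> form \<Rightarrow> form" where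
  "fadd f g = ((\<lambda>i. fst f i + fst g i), snd f + snd g)"
definition fscale :: "rat \<Rightarrow> form \<Rightarrow> form" where
  "fscale q f = ((\<lambda>i. q * fst f i), q * snd f)"
definition funit :: "nat \<Rightarrow> form" where
  "funit k = ((\<lambda>j. if j = k then 1 else 0), 0)"
definition fconst :: "rat \<Rightarrow> form" where
  "fconst q = ((\<lambda>_. 0), q)"

lemma aval_fadd[simp]: "aval m (fadd f g) x = aval m f x + aval m g x"
  by (simp add: aval_def fadd_def of_rat_add distrib_right sum.distrib)
lemma aval_fscale[simp]: "aval m (fscale q f) x = of_rat q * aval m f x"
  by (simp add: aval_def fscale_def of_rat_mult distrib_left sum_distrib_left mult.assoc)
lemma aval_funit[simp]: "k < m \<Longrightarrow> aval m (funit k) x = x k"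
proof -
  assume k: "k < m"
  have "(\<Sum>i<m. real_of_rat (fst (funit k) i) * x i) = (\<Sum>i<m. if i = k then x i else 0)"
    by (rule sum.cong) (auto simp: funit_def)
  then show ?thesis using k by (simp add: aval_def funit_def)
qed
lemma aval_fconst[simp]: "aval m (fconst q) x = of_rat q"
  by (simp add: aval_def fconst_def)

lemma aval_Suc_upd: "aval (Suc m) f (x(m:=t)) = aval m f x + of_rat (fst f m) * t"
proof -
  have "(\<Sum>i<m. real_of_rat (fst f i) * (x(m:=t)) i) = (\<Sum>i<m. real_of_rat (fst f i) * x i)"
    by (rule sum.cong) auto
  then show ?thesis by (simp add: aval_def)
qed

definition comb :: "nat \<Rightarrow> form \<Rightarrow> form \<Rightarrow> form" where
  "comb m p n = fadd (fscale (- fst n m) p) (fscale (fst p m) n)"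

definition fm :: "nat \<Rightarrow> form list \<Rightarrow> form list" where
  "fm m L = filter (\<lambda>f. fst f m = 0) L @
     [comb m p n. p \<leftarrow> filter (\<lambda>f. fst f m > 0) L, n \<leftarrow> filter (\<lambda>f. fst f m < 0) L]"

lemma comb_eval: "aval m (comb m p n) x =
   of_rat (- fst n m) * aval (Suc m) p (x(m:=t)) + of_rat (fst p m) * aval (Suc m) n (x(m:=t))"
proof -
  have "aval (Suc m) (comb m p n) (x(m:=t)) = aval m (comb m p n) x"
    by (simp add: aval_Suc_upd comb_def fadd_def fscale_def)
  then show ?thesis by (simp add: comb_def)
qed

lemma fm_correct: "x \<in> polyset m (fm m L) \<longleftrightarrow> (\<exists>t. x(m:=t) \<in> polyset (Suc m) L)"
proof
  assume "\<exists>t. x(m:=t) \<in> polyset (Suc m) L"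
  then obtain t where t: "\<And>f. f \<in> set L \<Longrightarrow> aval (Suc m) f (x(m:=t)) \<le> 0"
    by (auto simp: polyset_def)
  show "x \<in> polyset m (fm m L)"
    unfolding polyset_def
  proof (intro CollectI ballI)
    fix f assume "f \<in> set (fm m L)"
    then have "f \<in> set L \<and> fst f m = 0 \<or> (\<exists>p\<in>set L. 0 < fst p m \<and> (\<exists>n\<in>set L. fst n m < 0 \<and> f = comb m p n))"
      unfolding fm_def set_append set_concat set_map set_filter image_image by (auto 4 4)
    then show "aval m f x \<le> 0"
    proof
      assume "f \<in> set L \<and> fst f m = 0"
      then show ?thesis using t[of f] by (simp add: aval_Suc_upd)
    next
      assume "\<exists>p\<in>set L. 0 < fst p m \<and> (\<exists>n\<in>set L. fst n m < 0 \<and> f = comb m p n)"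
      then obtain p n where pn: "p \<in> set L" "n \<in> set L" "0 < fst p m" "fst n m < 0" "f = comb m p n"
        by blast
      have a: "of_rat (- fst n m) * aval (Suc m) p (x(m:=t)) \<le> 0"
        using t[OF pn(1)] pn(4) by (simp add: mult_nonneg_nonpos)
      have b: "of_rat (fst p m) * aval (Suc m) n (x(m:=t)) \<le> 0"
        using t[OF pn(2)] pn(3) by (simp add: mult_nonneg_nonpos)
      show ?thesis using a b pn(5) comb_eval[of m p n x t] by simp
    qed
  qed
next
  assume x: "x \<in> polyset m (fm m L)"
  define A :: "form \<Rightarrow> real" where "A f = aval m f x" for f
  define al :: "form \<Rightarrow> real" where "al f = real_of_rat (fst f m)" for f
  define PP where "PP = filter (\<lambda>f. fst f m > 0) L"
  define NN where "NN = filter (\<lambda>f. fst f m < 0) L"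
  define up :: "form \<Rightarrow> real" where "up f = - A f / al f" for f
  define lo :: "form \<Rightarrow> real" where "lo f = - A f / al f" for f
  have Z: "\<And>f. f \<in> set L \<Longrightarrow> fst f m = 0 \<Longrightarrow> A f \<le> 0"
    using x by (auto simp: polyset_def fm_def A_def)
  have C: "\<And>p n. p \<in> set PP \<Longrightarrow> n \<in> set NN \<Longrightarrow> lo n \<le> up p"
  proof -
    fix p n assume p: "p \<in> set PP" and n: "n \<in> set NN"
    have "aval m (comb m p n) x \<le> 0"
      using x p n by (auto simp: polyset_def fm_def PP_def NN_def)
    hence "(- al n) * A p + al p * A n \<le> 0"
      using comb_eval[of m p n x 0] by (simp add: A_def al_def comb_def of_rat_minus)
    moreover have "al p > 0" "al n < 0" using p n by (auto simp: PP_def NN_def al_def)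
    ultimately show "lo n \<le> up p" unfolding lo_def up_def
      by (simp add: divide_simps) (smt (verit) mult.commute)
  qed
  define t where "t = (if NN = [] then (if PP = [] then 0 else Min (up ` set PP)) else Max (lo ` set NN))"
  have tup: "t \<le> up p" if p: "p \<in> set PP" for p
  proof (cases "NN = []")
    case True then show ?thesis using p by (auto simp: t_def)
  next
    case False then show ?thesis using p C by (auto simp: t_def)
  qed
  have tlo: "lo n \<le> t" if n: "n \<in> set NN" for n
    using n by (auto simp: t_def)
  have "x(m:=t) \<in> polyset (Suc m) L"
    unfolding polyset_def
  proof (clarify)
    fix f assume f: "f \<in> set L"
    have ev: "aval (Suc m) f (x(m:=t)) = A f + al f * t" by (simp add: aval_Suc_upd A_def al_def)
    consider "fst f m = 0" | "fst f m > 0" | "fst f m < 0" by linarith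
    then show "aval (Suc m) f (x(m:=t)) \<le> 0"
    proof cases
      case 1 then show ?thesis using Z[OF f] ev by (simp add: al_def)
    next
      case 2
      then have "al f > 0" "t \<le> up f" using tup f by (auto simp: al_def PP_def)
      then show ?thesis using ev by (simp add: up_def field_simps)
    next
      case 3
      then have "al f < 0" "lo f \<le> t" using tlo f by (auto simp: al_def NN_def)
      then show ?thesis using ev by (simp add: lo_def field_simps)
    qed
  qed
  then show "\<exists>t. x(m:=t) \<in> polyset (Suc m) L" by blast
qed




lemma polyset_append: "polyset m (L1 @ L2) = polyset m L1 \<inter> polyset m L2"
  by (auto simp: polyset_def)

lemma aval_agree: "\<forall>i<k. y i = x i \<Longrightarrow> aval k f y = aval k f x"
  unfolding aval_def by (intro arg_cong2[where f="(+)"] sum.cong) auto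

lemma proj: "rpoly (k+m) S \<Longrightarrow> rpoly k {x. \<exists>y. (\<forall>i<k. y i = x i) \<and> y \<in> S}"
proof (induction m arbitrary: S)
  case 0
  then obtain L where L: "S = polyset k L" by (auto simp: rpoly_def)
  have "{x. \<exists>y. (\<forall>i<k. y i = x i) \<and> y \<in> S} = S"
  proof (rule set_eqI, rule iffI)
    fix x assume "x \<in> {x. \<exists>y. (\<forall>i<k. y i = x i) \<and> y \<in> S}"
    then obtain y where y: "\<forall>i<k. y i = x i" "y \<in> S" by auto
    then show "x \<in> S" using aval_agree[OF y(1)] by (auto simp: L polyset_def)
  qed auto
  then show ?case using 0 by simp
next
  case (Suc m)
  from Suc.prems obtain L where L: "S = polyset (Suc (k+m)) L" by (auto simp: rpoly_def)
  define S1 where "S1 = polyset (k+m) (fm (k+m) L)"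
  have "rpoly (k+m) S1" by (auto simp: rpoly_def S1_def)
  from Suc.IH[OF this] have r: "rpoly k {x. \<exists>y. (\<forall>i<k. y i = x i) \<and> y \<in> S1}" .
  have "{x. \<exists>y. (\<forall>i<k. y i = x i) \<and> y \<in> S1} = {x. \<exists>y. (\<forall>i<k. y i = x i) \<and> y \<in> S}"
  proof (rule set_eqI, rule iffI)
    fix x assume "x \<in> {x. \<exists>y. (\<forall>i<k. y i = x i) \<and> y \<in> S1}"
    then obtain y t where "\<forall>i<k. y i = x i" "y(k+m:=t) \<in> S"
      using fm_correct by (auto simp: S1_def L)
    then show "x \<in> {x. \<exists>y. (\<forall>i<k. y i = x i) \<and> y \<in> S}"
      by (intro CollectI exI[of _ "y(k+m:=t)"]) auto
  next
    fix x assume "x \<in> {x. \<exists>y. (\<forall>i<k. y i = x i) \<and> y \<in> S}"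
    then obtain y where y: "\<forall>i<k. y i = x i" "y \<in> S" by auto
    then have "y(k+m := y (k+m)) \<in> S" by simp
    then have "y \<in> S1" using fm_correct unfolding S1_def L by blast
    then show "x \<in> {x. \<exists>y. (\<forall>i<k. y i = x i) \<and> y \<in> S1}" using y by auto
  qed
  then show ?case using r by simp
qed

definition polyR :: "(real \<times> real) set \<Rightarrow> bool" where
  "polyR R \<longleftrightarrow> (\<exists>L :: (rat \<times> rat \<times> rat) list.
        R = {(w0, w1). \<forall>(\<alpha>, \<beta>, \<gamma>)\<in>set L. of_rat \<alpha> * w0 + of_rat \<beta> * w1 \<le> of_rat \<gamma>})"

definition pt :: "real \<Rightarrow> real \<Rightarrow> nat \<Rightarrow> real" where
  "pt w0 w1 = (\<lambda>i. if i = 0 then w0 else if i = 1 then w1 else 0)"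

lemma aval2: "aval 2 f x = of_rat (fst f 0) * x 0 + of_rat (fst f 1) * x 1 + of_rat (snd f)"
  by (simp add: aval_def numeral_2_eq_2)

lemma rpoly2_polyR: "rpoly 2 T \<Longrightarrow> polyR {(w0, w1). pt w0 w1 \<in> T}"
proof -
  assume "rpoly 2 T"
  then obtain L where L: "T = polyset 2 L" by (auto simp: rpoly_def)
  show ?thesis unfolding polyR_def
  proof (rule exI[of _ "map (\<lambda>f. (fst f 0, fst f 1, - snd f)) L"], rule set_eqI)
    fix p :: "real \<times> real"
    obtain w0 w1 where p: "p = (w0, w1)" by fastforce
    have "pt w0 w1 \<in> T \<longleftrightarrow> (\<forall>f\<in>set L. of_rat (fst f 0) * w0 + of_rat (fst f 1) * w1 \<le> of_rat (- snd f))"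
      by (auto simp: L polyset_def aval2 pt_def of_rat_minus)
    then show "p \<in> {(w0, w1). pt w0 w1 \<in> T} \<longleftrightarrow> p \<in> {(w0, w1). \<forall>(\<alpha>, \<beta>, \<gamma>)\<in>set (map (\<lambda>f. (fst f 0, fst f 1, - snd f)) L). of_rat \<alpha> * w0 + of_rat \<beta> * w1 \<le> of_rat \<gamma>}"
      by (auto simp: p)
  qed
qed

definition tform :: "nat \<Rightarrow> nat \<Rightarrow> rat \<times> rat \<times> rat \<Rightarrow> form" where
  "tform i j t = (case t of (\<alpha>, \<beta>, \<gamma>) \<Rightarrow> fadd (fscale \<alpha> (funit i)) (fadd (fscale \<beta> (funit j)) (fconst (- \<gamma>))))"

lemma tform_eval: "i < m \<Longrightarrow> j < m \<Longrightarrow> aval m (tform i j (\<alpha>, \<beta>, \<gamma>)) x \<le> 0 \<longleftrightarrow> of_rat \<alpha> * x i + of_rat \<beta> * x j \<le> of_rat \<gamma>"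
  by (auto simp: tform_def of_rat_minus)

lemma polyR_tform: "R = {(w0, w1). \<forall>(\<alpha>, \<beta>, \<gamma>)\<in>set L. of_rat \<alpha> * w0 + of_rat \<beta> * w1 \<le> of_rat \<gamma>}
   \<Longrightarrow> i < m \<Longrightarrow> j < m \<Longrightarrow> polyset m (map (tform i j) L) = {x. (x i, x j) \<in> R}"
  by (auto simp: polyset_def tform_eval split: prod.splits)

lemma polyR_comp: "polyR R1 \<Longrightarrow> polyR R2 \<Longrightarrow> polyR (R1 O R2)"
proof -
  assume "polyR R1" "polyR R2"
  then obtain L1 L2 where L1: "R1 = {(w0, w1). \<forall>(\<alpha>, \<beta>, \<gamma>)\<in>set L1. of_rat \<alpha> * w0 + of_rat \<beta> * w1 \<le> of_rat \<gamma>}"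
    and L2: "R2 = {(w0, w1). \<forall>(\<alpha>, \<beta>, \<gamma>)\<in>set L2. of_rat \<alpha> * w0 + of_rat \<beta> * w1 \<le> of_rat \<gamma>}"
    unfolding polyR_def by blast
  define S :: "(nat \<Rightarrow> real) set" where "S = {x. (x 0, x 2) \<in> R1 \<and> (x 2, x 1) \<in> R2}"
  have "S = polyset 3 (map (tform 0 2) L1 @ map (tform 2 1) L2)"
  proof -
    have e1: "polyset 3 (map (tform 0 2) L1) = {x. (x 0, x 2) \<in> R1}" by (rule polyR_tform[OF L1]) auto
    have e2: "polyset 3 (map (tform 2 1) L2) = {x. (x 2, x 1) \<in> R2}" by (rule polyR_tform[OF L2]) auto
    show ?thesis unfolding polyset_append e1 e2 S_def by auto
  qed
  then have "rpoly (2+1) S" by (auto simp: rpoly_def)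
  from proj[OF this] have "rpoly 2 {x. \<exists>y. (\<forall>i<2. y i = x i) \<and> y \<in> S}" .
  from rpoly2_polyR[OF this] have P: "polyR {(w0, w1). pt w0 w1 \<in> {x. \<exists>y. (\<forall>i<2. y i = x i) \<and> y \<in> S}}" .
  have "{(w0, w1). pt w0 w1 \<in> {x. \<exists>y. (\<forall>i<2. y i = x i) \<and> y \<in> S}} = R1 O R2"
  proof (rule set_eqI, rule iffI)
    fix p assume "p \<in> {(w0, w1). pt w0 w1 \<in> {x. \<exists>y. (\<forall>i<2. y i = x i) \<and> y \<in> S}}"
    then obtain w0 w1 y where "p = (w0, w1)" "\<forall>i<2. y i = pt w0 w1 i" "y \<in> S" by auto
    moreover then have "y 0 = w0" "y 1 = w1" by (auto simp: pt_def)
    ultimately show "p \<in> R1 O R2" unfolding S_def by auto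
  next
    fix p assume "p \<in> R1 O R2"
    then obtain w0 w1 z where p: "p = (w0, w1)" "(w0, z) \<in> R1" "(z, w1) \<in> R2" by auto
    have "(\<forall>i<2. ((pt w0 w1)(2:=z)) i = pt w0 w1 i) \<and> (pt w0 w1)(2:=z) \<in> S"
      using p by (auto simp: S_def pt_def less_2_cases_iff)
    then show "p \<in> {(w0, w1). pt w0 w1 \<in> {x. \<exists>y. (\<forall>i<2. y i = x i) \<and> y \<in> S}}" using p by blast
  qed
  with P show ?thesis by simp
qed

lemma good_gen:
  assumes sub: "R \<subseteq> econ a b \<times> econ a b" and pr: "polyR R"
  shows "good_rel R (econ a b)"
proof -
  let ?E = "econ a b"
  from pr obtain L where L: "R = {(w0, w1). \<forall>(\<alpha>, \<beta>, \<gamma>)\<in>set L. of_rat \<alpha> * w0 + of_rat \<beta> * w1 \<le> of_rat \<gamma>}"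
    unfolding polyR_def by blast
  have RI: "R = \<Inter> ((\<lambda>(\<alpha>, \<beta>, \<gamma>). {p. inner (of_rat \<alpha> :: real, of_rat \<beta> :: real) p \<le> of_rat \<gamma>}) ` set L)"
    unfolding L by (auto simp: inner_Pair split: prod.splits)
  have cl: "closed R" unfolding RI by (intro closed_Inter) (auto simp: closed_halfspace_le)
  have cv: "convex R" unfolding RI by (intro convex_Inter) (auto simp: convex_halfspace_le)
  have bE: "bounded (?E \<times> ?E)" by (simp add: econ_def bounded_Times)
  have img: "\<exists>l u. f ` (R \<inter> (I \<times> J)) = {l..u}" if I: "I \<in> subints ?E" and J: "J \<in> subints ?E"
     and f: "f = fst \<or> f = snd" for I J and f :: "real \<times> real \<Rightarrow> real"
  proof -
    have cI: "closed I" "convex I" "closed J" "convex J" using I J by (auto simp: subints_def)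
    have K: "compact (R \<inter> (I \<times> J))"
      unfolding compact_eq_bounded_closed
    proof
      show "bounded (R \<inter> I \<times> J)" using bE sub by (meson bounded_subset inf.coboundedI1)
      show "closed (R \<inter> I \<times> J)" using cI cl by (intro closed_Int closed_Times)
    qed
    have C: "convex (R \<inter> (I \<times> J))" using cv cI by (simp add: convex_Int convex_Times)
    have lf: "linear f" using f by (auto simp: linear_fst linear_snd)
    have "compact (f ` (R \<inter> (I \<times> J)))"
      using f K by (auto intro!: compact_continuous_image continuous_on_fst continuous_on_snd continuous_on_id)
    moreover have "connected (f ` (R \<inter> (I \<times> J)))"
      using convex_connected convex_linear_image[OF lf C] by blast
    ultimately show ?thesis using connected_compact_interval_1 by blast
  qed
  have UE: "econ a b \<in> subints ?E" by (auto simp: subints_def econ_def)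
  have A: "rimg R ?E I \<in> subints ?E \<and> rpre R ?E I \<in> subints ?E" if I: "I \<in> subints ?E" for I
  proof -
    have "rimg R ?E I = snd ` (R \<inter> (I \<times> ?E))" unfolding rimg_def using sub by force
    moreover have "rpre R ?E I = fst ` (R \<inter> (?E \<times> I))" unfolding rpre_def using sub by force
    moreover have "rimg R ?E I \<subseteq> ?E" "rpre R ?E I \<subseteq> ?E" by (auto simp: rimg_def rpre_def)
    ultimately show ?thesis using img[OF I UE, of snd] img[OF UE I, of fst] unfolding subints_def by auto
  qed
  show ?thesis unfolding good_rel_def using sub cl cv L A by blast
qed




definition fsub :: "form \<Rightarrow> form \<Rightarrow> form" where
  "fsub f g = fadd f (fscale (-1) g)"
lemma aval_fsub[simp]: "aval m (fsub f g) x = aval m f x - aval m g x"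
  by (simp add: fsub_def)

fun clk :: "'c etp \<Rightarrow> 'c \<Rightarrow> nat \<Rightarrow> form" where
  "clk P c 0 = fconst 0"
| "clk P c (Suc j) = (if c \<in> rst P j then fconst 0 else fadd (clk P c j) (funit (j+2)))"

fun en :: "'c etp \<Rightarrow> nat \<Rightarrow> form" where
  "en P 0 = funit 0"
| "en P (Suc j) = fadd (en P j) (fadd (fscale (rate P j) (funit (j+2))) (fconst (upd P j)))"

definition clk1 :: "'c etp \<Rightarrow> 'c \<Rightarrow> nat \<Rightarrow> form" where
  "clk1 P c j = fadd (clk P c j) (funit (j+2))"
definition en1 :: "'c etp \<Rightarrow> nat \<Rightarrow> form" where
  "en1 P j = fadd (en P j) (fscale (rate P j) (funit (j+2)))"

fun atomc :: "('c \<Rightarrow> form) \<Rightarrow> 'c atom \<Rightarrow> form list" where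
  "atomc F (x, CLe, q) = [fsub (F x) (fconst q)]"
| "atomc F (x, CGe, q) = [fsub (fconst q) (F x)]"
| "atomc F (x, CEq, q) = [fsub (F x) (fconst q), fsub (fconst q) (F x)]"

definition clkc :: "('c \<Rightarrow> form) \<Rightarrow> 'c clkc \<Rightarrow> form list" where
  "clkc F g = concat (map (atomc F) g)"

lemma atomc_ok: "(\<forall>f\<in>set (atomc F atm). aval m f x \<le> 0) \<longleftrightarrow> sat_atom (\<lambda>c. aval m (F c) x) atm"
  by (induct F atm rule: atomc.induct) auto

lemma clkc_ok: "(\<forall>f\<in>set (clkc F g). aval m f x \<le> 0) \<longleftrightarrow> sat (\<lambda>c. aval m (F c) x) g"
  unfolding clkc_def sat_def set_concat set_map by (simp add: atomc_ok[symmetric])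

definition inE :: "rat \<Rightarrow> rat \<Rightarrow> form \<Rightarrow> form list" where
  "inE a b f = [fsub (fconst a) f, fsub f (fconst b)]"
lemma inE_ok: "(\<forall>g\<in>set (inE a b f). aval m g x \<le> 0) \<longleftrightarrow> aval m f x \<in> econ a b"
  by (auto simp: inE_def econ_def)

definition eqc :: "form \<Rightarrow> form \<Rightarrow> form list" where
  "eqc f g = [fsub f g, fsub g f]"
lemma eqc_ok: "(\<forall>h\<in>set (eqc f g). aval m h x \<le> 0) \<longleftrightarrow> aval m f x = aval m g x"
  by (auto simp: eqc_def)

definition CL :: "'c etp \<Rightarrow> rat \<Rightarrow> rat \<Rightarrow> 'c list \<Rightarrow> form list" where
  "CL P a b cs = (let n = length (trs P) in
     concat (map (\<lambda>j. [fscale (-1) (funit (j+2))] @ clkc (\<lambda>c. clk P c j) (inv P j)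
        @ clkc (\<lambda>c. clk1 P c j) (inv P j) @ clkc (\<lambda>c. clk1 P c j) (guard P j)
        @ inE a b (en1 P j)) [0..<n])
   @ concat (map (\<lambda>j. inE a b (en P j)) [0..<Suc n])
   @ eqc (en P n) (funit 1)
   @ concat (map (\<lambda>c. eqc (clk P c n) (fconst 0)) cs))"

lemma CL_ok:
  assumes cs: "set cs = UNIV"
  shows "x \<in> polyset (length (trs P) + 2) (CL P a b cs) \<longleftrightarrow>
    (let n = length (trs P); m = n + 2 in
     (\<forall>j<n. x (j+2) \<ge> 0 \<and> sat (\<lambda>c. aval m (clk P c j) x) (inv P j)
        \<and> sat (\<lambda>c. aval m (clk1 P c j) x) (inv P j) \<and> sat (\<lambda>c. aval m (clk1 P c j) x) (guard P j)
        \<and> aval m (en1 P j) x \<in> econ a b)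
   \<and> (\<forall>j\<le>n. aval m (en P j) x \<in> econ a b)
   \<and> aval m (en P n) x = x 1
   \<and> (\<forall>c. aval m (clk P c n) x = 0))" (is "_ \<longleftrightarrow> ?R")
proof -
  let ?n = "length (trs P)" let ?m = "length (trs P) + 2"
  have "x \<in> polyset ?m (CL P a b cs) \<longleftrightarrow>
     (\<forall>j<?n. (\<forall>f\<in>set [fscale (-1) (funit (j+2))]. aval ?m f x \<le> 0)
        \<and> (\<forall>f\<in>set (clkc (\<lambda>c. clk P c j) (inv P j)). aval ?m f x \<le> 0)
        \<and> (\<forall>f\<in>set (clkc (\<lambda>c. clk1 P c j) (inv P j)). aval ?m f x \<le> 0)
        \<and> (\<forall>f\<in>set (clkc (\<lambda>c. clk1 P c j) (guard P j)). aval ?m f x \<le> 0)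
        \<and> (\<forall>f\<in>set (inE a b (en1 P j)). aval ?m f x \<le> 0))
   \<and> (\<forall>j\<le>?n. (\<forall>f\<in>set (inE a b (en P j)). aval ?m f x \<le> 0))
   \<and> (\<forall>f\<in>set (eqc (en P ?n) (funit 1)). aval ?m f x \<le> 0)
   \<and> (\<forall>c. (\<forall>f\<in>set (eqc (clk P c ?n) (fconst 0)). aval ?m f x \<le> 0))"
    unfolding polyset_def CL_def Let_def using cs
    by (simp add: ball_Un atLeast0LessThan lessThan_Suc_atMost del: upt_Suc) blast
  also have "\<dots> \<longleftrightarrow> ?R"
    unfolding clkc_ok inE_ok eqc_ok Let_def by simp
  finally show ?thesis .
qed




lemma erel_eq:
  assumes cs: "set cs = UNIV"
  shows "erel P (econ a b) = {(w0, w1). \<exists>y. y 0 = w0 \<and> y 1 = w1 \<and> y \<in> polyset (length (trs P) + 2) (CL P a b cs)}"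
proof (rule set_eqI, rule iffI)
  let ?n = "length (trs P)" let ?m = "length (trs P) + 2"
  fix p assume "p \<in> erel P (econ a b)"
  then obtain w0 w1 v w where p: "p = (w0, w1)" and r: "run_sat P (econ a b) v w"
    and b: "v 0 = (\<lambda>_. 0)" "w 0 = w0" "v (2 * ?n) = (\<lambda>_. 0)" "w (2 * ?n) = w1"
    unfolding erel_def by blast
  from r obtain d where d: "\<And>j. j < ?n \<Longrightarrow> d j \<ge> 0
        \<and> v (2*j+1) = (\<lambda>x. v (2*j) x + d j)
        \<and> v (2*j+2) = reset (v (2*j+1)) (rst P j)
        \<and> sat (v (2*j)) (inv P j)
        \<and> sat (v (2*j+1)) (inv P j) \<and> sat (v (2*j+1)) (guard P j)
        \<and> w (2*j+1) = w (2*j) + d j * of_rat (rate P j)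
        \<and> w (2*j+2) = w (2*j+1) + of_rat (upd P j)"
     and wE: "\<And>j. j \<le> 2 * ?n \<Longrightarrow> w j \<in> econ a b"
    unfolding run_sat_def Let_def by blast
  define x where "x i = (if i = 0 then w0 else if i = 1 then w1 else d (i - 2))" for i
  have I: "v (2*j) = (\<lambda>c. aval ?m (clk P c j) x) \<and> w (2*j) = aval ?m (en P j) x" if "j \<le> ?n" for j
    using that
  proof (induction j)
    case 0 then show ?case using b by (simp add: x_def)
  next
    case (Suc j)
    then have j: "j < ?n" by simp
    have e: "2 * Suc j = 2*j+2" by simp
    show ?case unfolding e using d[OF j] Suc.IH j
      by (auto simp: reset_def x_def fun_eq_iff)
  qed
  have c1: "v (2*j+1) = (\<lambda>c. aval ?m (clk1 P c j) x)" "w (2*j+1) = aval ?m (en1 P j) x" if j: "j < ?n" for j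
    using d[OF j] I[of j] j by (auto simp: clk1_def en1_def x_def fun_eq_iff mult.commute)
  have "x \<in> polyset ?m (CL P a b cs)"
    unfolding CL_ok[OF cs] Let_def
  proof (intro conjI allI impI)
    fix j assume j: "j < ?n"
    show "0 \<le> x (j+2)" using d[OF j] by (simp add: x_def)
    show "sat (\<lambda>c. aval ?m (clk P c j) x) (inv P j)" using d[OF j] I[of j] j by simp
    show "sat (\<lambda>c. aval ?m (clk1 P c j) x) (inv P j)"
    proof -
      have "sat (v (2*j+1)) (inv P j)" using d[OF j] by blast
      then show ?thesis using c1(1)[OF j] by simp
    qed
    show "sat (\<lambda>c. aval ?m (clk1 P c j) x) (guard P j)"
    proof -
      have "sat (v (2*j+1)) (guard P j)" using d[OF j] by blast
      then show ?thesis using c1(1)[OF j] by simp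
    qed
    show "aval ?m (en1 P j) x \<in> econ a b" using wE[of "2*j+1"] c1[OF j] j by simp
  next
    fix j assume j: "j \<le> ?n"
    show "aval ?m (en P j) x \<in> econ a b" using wE[of "2*j"] I[OF j] j by simp
  next
    show "aval ?m (en P ?n) x = x 1" using I[of ?n] b by (simp add: x_def)
  next
    fix c show "aval ?m (clk P c ?n) x = 0" using I[of ?n] b by (simp add: fun_eq_iff)
  qed
  moreover have "x 0 = w0" "x 1 = w1" by (auto simp: x_def)
  ultimately show "p \<in> {(w0, w1). \<exists>y. y 0 = w0 \<and> y 1 = w1 \<and> y \<in> polyset (length (trs P) + 2) (CL P a b cs)}"
    using p by blast
next
  let ?n = "length (trs P)" let ?m = "length (trs P) + 2"
  fix p assume "p \<in> {(w0, w1). \<exists>y. y 0 = w0 \<and> y 1 = w1 \<and> y \<in> polyset (length (trs P) + 2) (CL P a b cs)}"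
  then obtain w0 w1 y where p: "p = (w0, w1)" and y: "y 0 = w0" "y 1 = w1" "y \<in> polyset ?m (CL P a b cs)"
    by blast
  note C = y(3)[unfolded CL_ok[OF cs] Let_def]
  define d where "d j = y (j+2)" for j
  define v where "v k = (\<lambda>c. aval ?m (clk P c (k div 2)) y + (if odd k then d (k div 2) else 0))" for k
  define w where "w k = aval ?m (en P (k div 2)) y + (if odd k then d (k div 2) * of_rat (rate P (k div 2)) else 0)" for k
  have ev: "v (2*j) = (\<lambda>c. aval ?m (clk P c j) y)" "w (2*j) = aval ?m (en P j) y" for j
    by (auto simp: v_def w_def)
  have od: "v (2*j+1) = (\<lambda>c. aval ?m (clk1 P c j) y)" "w (2*j+1) = aval ?m (en1 P j) y" if "j < ?n" for j
    using that by (auto simp: v_def w_def clk1_def en1_def d_def mult.commute)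
  have "run_sat P (econ a b) v w"
    unfolding run_sat_def Let_def
  proof (intro conjI exI[of _ d] allI impI)
    fix j assume j: "j < ?n"
    have e: "2*j+2 = 2 * Suc j" by simp
    show "0 \<le> d j" using C j by (simp add: d_def)
    show "v (2*j+1) = (\<lambda>x. v (2*j) x + d j)" using j by (auto simp: v_def)
    show "v (2*j+2) = reset (v (2*j+1)) (rst P j)" unfolding e ev od[OF j] using j
      by (auto simp: reset_def clk1_def fun_eq_iff)
    show "sat (v (2*j)) (inv P j)" using C j ev by simp
    show "sat (v (2*j+1)) (inv P j)" using C j od[OF j] by simp
    show "sat (v (2*j+1)) (guard P j)" using C j od[OF j] by simp
    show "w (2*j+1) = w (2*j) + d j * of_rat (rate P j)" using j by (auto simp: w_def)
    show "w (2*j+2) = w (2*j+1) + of_rat (upd P j)" unfolding e ev od[OF j] using j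
      by (simp add: en1_def)
  next
    fix k assume k: "k \<le> 2 * ?n"
    show "w k \<in> econ a b"
    proof (cases "even k")
      case True
      then obtain j where "k = 2*j" by auto
      then show ?thesis using C k ev by auto
    next
      case False
      then obtain j where "k = 2*j+1" using oddE by blast
      then show ?thesis using C k od[of j] by auto
    qed
  qed
  moreover have "v 0 = (\<lambda>_. 0)" "w 0 = w0" using ev[of 0] y by auto
  moreover have "v (2 * ?n) = (\<lambda>_. 0)" "w (2 * ?n) = w1" using ev[of ?n] C y by auto
  ultimately show "p \<in> erel P (econ a b)" unfolding erel_def p by blast
qed




lemma erel_polyR: "polyR (erel (P :: ('c::finite) etp) (econ a b))"
proof -
  obtain cs :: "'c list" where cs: "set cs = UNIV" using finite_list[of "UNIV :: 'c set"] by auto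
  define S where "S = polyset (2 + length (trs P)) (CL P a b cs)"
  have "rpoly (2 + length (trs P)) S" by (auto simp: rpoly_def S_def)
  from rpoly2_polyR[OF proj[OF this]] have P: "polyR {(w0, w1). pt w0 w1 \<in> {x. \<exists>y. (\<forall>i<2. y i = x i) \<and> y \<in> S}}" .
  have "{(w0, w1). pt w0 w1 \<in> {x. \<exists>y. (\<forall>i<2. y i = x i) \<and> y \<in> S}} = erel P (econ a b)"
    unfolding erel_eq[OF cs] S_def by (auto simp: pt_def less_2_cases_iff add.commute)
  with P show ?thesis by simp
qed

lemma erel_sub: "erel P (econ a b) \<subseteq> econ a b \<times> econ a b"
  unfolding erel_def run_sat_def Let_def by fastforce

lemma ecomp_ok: "Ps \<noteq> [] \<Longrightarrow> polyR (ecomp (Ps :: ('c::finite) etp list) (econ a b)) \<and> ecomp Ps (econ a b) \<subseteq> econ a b \<times> econ a b"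
proof (induction Ps)
  case Nil then show ?case by simp
next
  case (Cons P Qs)
  show ?case
  proof (cases "Qs = []")
    case True then show ?thesis using erel_polyR[of P a b] erel_sub[of P a b] by simp
  next
    case False
    then obtain v va where Q: "Qs = v # va" by (auto simp: neq_Nil_conv)
    from Cons.IH False have IH: "polyR (ecomp Qs (econ a b))" "ecomp Qs (econ a b) \<subseteq> econ a b \<times> econ a b" by auto
    show ?thesis unfolding Q using polyR_comp[OF erel_polyR[of P a b] IH(1)] IH(2) erel_sub[of P a b] unfolding Q by auto
  qed
qed

theorem mainTheorem2:
  fixes P :: "('c::finite) etp" and a b :: rat
  shows "good_rel (erel P (econ a b)) (econ a b)
       \<and> (\<forall>Ps :: 'c etp list. Ps \<noteq> [] \<longrightarrow> good_rel (ecomp Ps (econ a b)) (econ a b))"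
  using good_gen[OF erel_sub erel_polyR] good_gen ecomp_ok by blast


end
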